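(* Let $(T_k)_{k\in\mathbb{N}}$ be i.i.d. with law $\mathcal{T}$ and let $(R_k)_{k\in\mathbb{N}}$ be an independent sequence of independent (not necessarily identically distributed) $[0,\infty]$-valued random variables with $\prod_{k=1}^\infty\mathsf{P}(R_k<T_k)=0$, and let $\tilde T$ be defined a.s. by $\tilde T=R_1+\cdots+R_{k-1}+T_k$ on $\{R_1<T_1,\ldots,R_{k-1}<T_{k-1},T_k\leq R_k\}$, $k\in\mathbb{N}$. If $\overline{F}$ is supermultiplicative then $\mathsf{P}(\tilde T>t)\leq\overline{F}(t)$ for all $t\in[0,\infty)$. If $\overline{F}$ is submultiplicative and additionally $\sum_{l=1}^kR_l\uparrow\infty$ a.s. as $k\to\infty$, then $\mathsf{P}(\tilde T>t)\geq\overline{F}(t)$ for all $t\in[0,\infty)$.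
   Context: Standing assumptions: $\mathcal{T}$ is a probability law on the Borel sets of $[0,\infty]$ with $\mathcal{T}((0,\infty])>0$ and $\inf\mathrm{supp}(\mathcal{T})=0$; $\overline{F}(t):=\mathcal{T}((t,\infty])$ for $t\in[0,\infty)$. $\overline{F}$ is supermultiplicative if $\overline{F}(x+y)\geq\overline{F}(x)\overline{F}(y)$ for all $x,y\in[0,\infty)$, submultiplicative if the reverse inequality holds for all $x,y$. *)

theory Defs
  imports "HOL-Probability.Probability"
begin

definition measure_support :: "'b::topological_space measure \<Rightarrow> 'b set" where
  "measure_support N = {x. \<forall>U. open U \<and> x \<in> U \<longrightarrow> emeasure N U > 0}"

definition Fbar :: "ennreal measure \<Rightarrow> real \<Rightarrow> real" where
  "Fbar \<T> t = measure \<T> {ennreal t<..}"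

definition supermultiplicative :: "(real \<Rightarrow> real) \<Rightarrow> bool" where
  "supermultiplicative F \<longleftrightarrow> (\<forall>x y. 0 \<le> x \<longrightarrow> 0 \<le> y \<longrightarrow> F (x + y) \<ge> F x * F y)"

definition submultiplicative :: "(real \<Rightarrow> real) \<Rightarrow> bool" where
  "submultiplicative F \<longleftrightarrow> (\<forall>x y. 0 \<le> x \<longrightarrow> 0 \<le> y \<longrightarrow> F (x + y) \<le> F x * F y)"

text \<open>Ttilde = R_0 + ... + R_(k-1) + T_k on the event that k is the first index with
  T_k \<le> R_k (indices start at 0).  Off that event (a null set under the hypotheses)
  the value is irrelevant; we put \<infinity>.\<close>
definition Ttilde :: "(nat \<Rightarrow> 'a \<Rightarrow> ennreal) \<Rightarrow> (nat \<Rightarrow> 'a \<Rightarrow> ennreal) \<Rightarrow> 'a \<Rightarrow> ennreal" where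
  "Ttilde T R \<omega> =
     (if \<exists>k. T k \<omega> \<le> R k \<omega>
      then (let k = (LEAST k. T k \<omega> \<le> R k \<omega>) in (\<Sum>l<k. R l \<omega>) + T k \<omega>)
      else \<infinity>)"

end

theory Submission
  imports Defs
begin


fun idx :: "nat + nat \<Rightarrow> nat" where "idx (Inl k) = k" | "idx (Inr k) = k"

fun FF :: "ennreal \<Rightarrow> (ennreal \<Rightarrow> ennreal) \<Rightarrow> ennreal \<Rightarrow> nat \<Rightarrow> nat \<Rightarrow> ennreal \<Rightarrow> (nat + nat \<Rightarrow> ennreal) \<Rightarrow> ennreal" where
  "FF t b a 0 m c \<xi> = b c"
| "FF t b a (Suc n) m c \<xi> = a * of_bool (\<xi> (Inl m) \<le> \<xi> (Inr m) \<and> t < c + \<xi> (Inl m))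
      + of_bool (\<xi> (Inr m) < \<xi> (Inl m)) * FF t b a n (Suc m) (c + \<xi> (Inr m)) \<xi>"

lemma FF_local:
  assumes "\<And>i. m \<le> idx i \<Longrightarrow> \<xi> i = \<xi>' i"
  shows "FF t b a n m c \<xi> = FF t b a n m c \<xi>'"
  using assms
proof (induction n arbitrary: m c)
  case 0 then show ?case by simp
next
  case (Suc n)
  have e: "\<xi> (Inl m) = \<xi>' (Inl m)" "\<xi> (Inr m) = \<xi>' (Inr m)" using Suc.prems by auto
  have "FF t b a n (Suc m) (c + \<xi> (Inr m)) \<xi> = FF t b a n (Suc m) (c + \<xi> (Inr m)) \<xi>'"
    by (rule Suc.IH) (use Suc.prems in auto)
  then show ?case using e by simp
qed

lemma FF_meas:
  assumes b: "b \<in> borel_measurable borel" and K: "{i. m \<le> idx i} \<subseteq> K"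
  shows "(\<lambda>(c,\<xi>). FF t b a n m c \<xi>) \<in> borel_measurable (borel \<Otimes>\<^sub>M PiM K (\<lambda>_. borel))"
  using K
proof (induction n arbitrary: m)
  case 0 then show ?case using b by simp
next
  case (Suc n)
  have l: "Inl m \<in> K" "Inr m \<in> K" using Suc.prems by auto
  have IH: "(\<lambda>(c,\<xi>). FF t b a n (Suc m) c \<xi>) \<in> borel_measurable (borel \<Otimes>\<^sub>M PiM K (\<lambda>_. borel))"
    by (rule Suc.IH) (use Suc.prems in auto)
  have c1: "(\<lambda>x::ennreal \<times> (nat+nat \<Rightarrow> ennreal). snd x i) \<in> borel_measurable (borel \<Otimes>\<^sub>M PiM K (\<lambda>_. borel))" if "i \<in> K" for i
    using that by measurable
  have c2: "(\<lambda>x::ennreal \<times> (nat+nat \<Rightarrow> ennreal). (fst x + snd x (Inr m), snd x)) \<in> (borel \<Otimes>\<^sub>M PiM K (\<lambda>_. borel)) \<rightarrow>\<^sub>M (borel \<Otimes>\<^sub>M PiM K (\<lambda>_. borel))"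
    using l by measurable
  have c3: "(\<lambda>x. FF t b a n (Suc m) (fst x + snd x (Inr m)) (snd x)) \<in> borel_measurable (borel \<Otimes>\<^sub>M PiM K (\<lambda>_. borel))"
    using measurable_compose[OF c2 IH] by (simp add: case_prod_beta)
  show ?case
    unfolding FF.simps case_prod_beta
    using l c1 c3 by measurable
qed




fun PHI :: "ennreal measure \<Rightarrow> (nat \<Rightarrow> ennreal measure) \<Rightarrow> ennreal \<Rightarrow> (ennreal \<Rightarrow> ennreal) \<Rightarrow> ennreal \<Rightarrow> nat \<Rightarrow> nat \<Rightarrow> ennreal \<Rightarrow> ennreal" where
  "PHI Tm mu t b a 0 m c = b c"
| "PHI Tm mu t b a (Suc n) m c = (\<integral>\<^sup>+p. (a * of_bool (fst p \<le> snd p \<and> t < c + fst p)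
      + of_bool (snd p < fst p) * PHI Tm mu t b a n (Suc m) (c + snd p)) \<partial>(Tm \<Otimes>\<^sub>M mu m))"

lemma PHI_meas:
  assumes b: "b \<in> borel_measurable borel" and Ts: "sets Tm = sets borel" and Tp: "prob_space Tm"
    and mus: "\<And>m. sets (mu m) = sets borel" and mup: "\<And>m. prob_space (mu m)"
  shows "PHI Tm mu t b a n m \<in> borel_measurable borel"
proof (induction n arbitrary: m)
  case 0 then show ?case using b by simp
next
  case (Suc n)
  interpret pp: pair_prob_space Tm "mu m" using Tp mup by (simp add: pair_prob_space_def pair_sigma_finite_def prob_space_imp_sigma_finite)
  have sp: "sets (Tm \<Otimes>\<^sub>M mu m) = sets (borel \<Otimes>\<^sub>M borel)"
    using Ts mus by (intro sets_pair_measure_cong) auto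
  have IH: "PHI Tm mu t b a n (Suc m) \<in> borel_measurable borel" by (rule Suc.IH)
  have "(\<lambda>(c, p). a * of_bool (fst p \<le> snd p \<and> t < c + fst p)
      + of_bool (snd p < fst p) * PHI Tm mu t b a n (Suc m) (c + snd p)) \<in> borel_measurable (borel \<Otimes>\<^sub>M (borel \<Otimes>\<^sub>M borel))"
    using IH by measurable
  then have "(\<lambda>(c, p). a * of_bool (fst p \<le> snd p \<and> t < c + fst p)
      + of_bool (snd p < fst p) * PHI Tm mu t b a n (Suc m) (c + snd p)) \<in> borel_measurable (borel \<Otimes>\<^sub>M (Tm \<Otimes>\<^sub>M mu m))"
    by (subst measurable_cong_sets[OF sets_pair_measure_cong[OF refl sp] refl])
  then show ?case
    unfolding PHI.simps by (rule pp.borel_measurable_nn_integral)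
qed




lemma (in prob_space) indep_var_nn_integral:
  assumes ind: "indep_var S X T Y" and f: "case_prod f \<in> borel_measurable (S \<Otimes>\<^sub>M T)"
  shows "(\<integral>\<^sup>+\<omega>. f (X \<omega>) (Y \<omega>) \<partial>M) = (\<integral>\<^sup>+x. \<integral>\<^sup>+y. f x y \<partial>(distr M T Y) \<partial>(distr M S X))"
proof -
  have rv: "random_variable S X" "random_variable T Y" and eq: "distr M S X \<Otimes>\<^sub>M distr M T Y = distr M (S \<Otimes>\<^sub>M T) (\<lambda>x. (X x, Y x))"
    using ind unfolding indep_var_distribution_eq by auto
  interpret X: prob_space "distr M S X" by (rule prob_space_distr) fact
  interpret Y: prob_space "distr M T Y" by (rule prob_space_distr) fact
  interpret XY: pair_prob_space "distr M S X" "distr M T Y" ..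
  have "(\<integral>\<^sup>+\<omega>. f (X \<omega>) (Y \<omega>) \<partial>M) = (\<integral>\<^sup>+p. case_prod f p \<partial>distr M (S \<Otimes>\<^sub>M T) (\<lambda>x. (X x, Y x)))"
    using rv f by (subst nn_integral_distr) (auto intro: measurable_Pair)
  also have "\<dots> = (\<integral>\<^sup>+p. case_prod f p \<partial>(distr M S X \<Otimes>\<^sub>M distr M T Y))" by (simp add: eq)
  also have "\<dots> = (\<integral>\<^sup>+x. \<integral>\<^sup>+y. f x y \<partial>(distr M T Y) \<partial>(distr M S X))"
  proof -
    have fm: "case_prod f \<in> borel_measurable (distr M S X \<Otimes>\<^sub>M distr M T Y)"
      using f by (simp add: measurable_cong_sets[OF sets_pair_measure_cong[OF sets_distr sets_distr] refl])
    show ?thesis using Y.nn_integral_fst[OF fm] by simp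
  qed
  finally show ?thesis .
qed

locale ttsetup = prob_space M for M :: "'a measure" +
  fixes Tm :: "ennreal measure" and T R :: "nat \<Rightarrow> 'a \<Rightarrow> ennreal"
  assumes Tp: "prob_space Tm" and Ts: "sets Tm = sets borel"
    and T_meas: "\<And>k. T k \<in> borel_measurable M"
    and R_meas: "\<And>k. R k \<in> borel_measurable M"
    and T_law: "\<And>k. distr M borel (T k) = Tm"
    and indep: "indep_vars (\<lambda>_. borel) (\<lambda>i. case i of Inl k \<Rightarrow> T k | Inr k \<Rightarrow> R k) UNIV"
begin

abbreviation "XX \<equiv> (\<lambda>i. case i of Inl k \<Rightarrow> T k | Inr k \<Rightarrow> R k)"
abbreviation "mu \<equiv> (\<lambda>m. distr M borel (R m))"

lemma XX_meas: "XX i \<in> borel_measurable M"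
  using T_meas R_meas by (cases i) auto

lemma pair_law: "distr M (borel \<Otimes>\<^sub>M borel) (\<lambda>\<omega>. (T m \<omega>, R m \<omega>)) = Tm \<Otimes>\<^sub>M mu m"
proof -
  have "indep_var (PiM {Inl m} (\<lambda>_. borel)) (\<lambda>\<omega>. restrict (\<lambda>i. XX i \<omega>) {Inl m})
         (PiM {Inr m} (\<lambda>_. borel)) (\<lambda>\<omega>. restrict (\<lambda>i. XX i \<omega>) {Inr m})"
    by (rule indep_var_restrict[OF indep]) auto
  from indep_var_compose[OF this measurable_component_singleton[of "Inl m" "{Inl m}" "\<lambda>_. borel"]
      measurable_component_singleton[of "Inr m" "{Inr m}" "\<lambda>_. borel"]]
  have "indep_var borel (T m) borel (R m)" by (simp add: o_def)
  then show ?thesis unfolding indep_var_distribution_eq using T_law by auto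
qed

lemma link:
  assumes b: "b \<in> borel_measurable borel"
  shows "(\<integral>\<^sup>+\<omega>. FF t b a n m c (\<lambda>i. XX i \<omega>) \<partial>M) = PHI Tm mu t b a n m c"
proof (induction n arbitrary: m c)
  case 0 then show ?case by (simp add: emeasure_space_1)
next
  case (Suc n)
  define K1 where "K1 = {Inl m, Inr m}"
  define K2 where "K2 = {i. Suc m \<le> idx i}"
  have K12: "K1 \<inter> K2 = {}" unfolding K1_def K2_def by auto
  have ind0: "indep_var (PiM K1 (\<lambda>_. borel)) (\<lambda>\<omega>. restrict (\<lambda>i. XX i \<omega>) K1)
         (PiM K2 (\<lambda>_. borel)) (\<lambda>\<omega>. restrict (\<lambda>i. XX i \<omega>) K2)"
    by (rule indep_var_restrict[OF indep K12]) auto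
  define h where "h p = a * of_bool (fst p \<le> snd p \<and> t < c + fst p)
      + of_bool (snd p < fst p) * PHI Tm mu t b a n (Suc m) (c + snd p)" for p :: "ennreal \<times> ennreal"
  define g where "g z y = a * of_bool (z (Inl m) \<le> z (Inr m) \<and> t < c + z (Inl m))
      + of_bool (z (Inr m) < z (Inl m)) * FF t b a n (Suc m) (c + z (Inr m)) y" for z y :: "nat+nat \<Rightarrow> ennreal"
  have rvZ: "random_variable (PiM K1 (\<lambda>_. borel)) (\<lambda>\<omega>. restrict (\<lambda>i. XX i \<omega>) K1)"
      using ind0 by (rule indep_var_rv1)
  have hm: "h \<in> borel_measurable (borel \<Otimes>\<^sub>M borel)"
  proof -
    have PH: "PHI Tm mu t b a n (Suc m) \<in> borel_measurable borel"
      by (rule PHI_meas[OF b Ts Tp]) (auto intro: prob_space_distr R_meas)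
    show ?thesis unfolding h_def using PH by measurable
  qed
  have loc: "FF t b a n (Suc m) c' (restrict (\<lambda>i. XX i \<omega>) K2) = FF t b a n (Suc m) c' (\<lambda>i. XX i \<omega>)" for c' \<omega>
    by (rule FF_local) (auto simp: K2_def)
  have FFm: "(\<lambda>(c,\<xi>). FF t b a n (Suc m) c \<xi>) \<in> borel_measurable (borel \<Otimes>\<^sub>M PiM K2 (\<lambda>_. borel))"
    by (rule FF_meas[OF b]) (auto simp: K2_def)
  have inK1: "Inl m \<in> K1" "Inr m \<in> K1" by (auto simp: K1_def)
  have cm: "(\<lambda>x::(nat+nat \<Rightarrow> ennreal) \<times> (nat+nat \<Rightarrow> ennreal). (c + fst x (Inr m), snd x)) \<in> (PiM K1 (\<lambda>_. borel) \<Otimes>\<^sub>M PiM K2 (\<lambda>_. borel)) \<rightarrow>\<^sub>M (borel \<Otimes>\<^sub>M PiM K2 (\<lambda>_. borel))"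
    using inK1 by measurable
  have c3: "(\<lambda>x. FF t b a n (Suc m) (c + fst x (Inr m)) (snd x)) \<in> borel_measurable (PiM K1 (\<lambda>_. borel) \<Otimes>\<^sub>M PiM K2 (\<lambda>_. borel))"
    using measurable_compose[OF cm FFm] by (simp add: case_prod_beta)
  have gm: "case_prod g \<in> borel_measurable (PiM K1 (\<lambda>_. borel) \<Otimes>\<^sub>M PiM K2 (\<lambda>_. borel))"
    unfolding g_def case_prod_beta using c3 inK1 by measurable
  have "(\<integral>\<^sup>+\<omega>. FF t b a (Suc n) m c (\<lambda>i. XX i \<omega>) \<partial>M) = (\<integral>\<^sup>+\<omega>. g (restrict (\<lambda>i. XX i \<omega>) K1) (restrict (\<lambda>i. XX i \<omega>) K2) \<partial>M)"
    by (simp add: g_def loc K1_def)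
  also have "\<dots> = (\<integral>\<^sup>+z. \<integral>\<^sup>+y. g z y \<partial>(distr M (PiM K2 (\<lambda>_. borel)) (\<lambda>\<omega>. restrict (\<lambda>i. XX i \<omega>) K2)) \<partial>(distr M (PiM K1 (\<lambda>_. borel)) (\<lambda>\<omega>. restrict (\<lambda>i. XX i \<omega>) K1)))"
    by (rule indep_var_nn_integral[OF ind0 gm])
  also have "\<dots> = (\<integral>\<^sup>+z. h (z (Inl m), z (Inr m)) \<partial>(distr M (PiM K1 (\<lambda>_. borel)) (\<lambda>\<omega>. restrict (\<lambda>i. XX i \<omega>) K1)))"
  proof (rule nn_integral_cong)
    fix z :: "nat+nat \<Rightarrow> ennreal"
    have rvY: "random_variable (PiM K2 (\<lambda>_. borel)) (\<lambda>\<omega>. restrict (\<lambda>i. XX i \<omega>) K2)"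
      using ind0 by (rule indep_var_rv2)
    interpret Y: prob_space "distr M (PiM K2 (\<lambda>_. borel)) (\<lambda>\<omega>. restrict (\<lambda>i. XX i \<omega>) K2)"
      by (rule prob_space_distr[OF rvY])
    have fm: "FF t b a n (Suc m) (c + z (Inr m)) \<in> borel_measurable (PiM K2 (\<lambda>_. borel))"
      using measurable_Pair2[OF FFm, of "c + z (Inr m)"] by simp
    have "(\<integral>\<^sup>+y. g z y \<partial>(distr M (PiM K2 (\<lambda>_. borel)) (\<lambda>\<omega>. restrict (\<lambda>i. XX i \<omega>) K2)))
       = a * of_bool (z (Inl m) \<le> z (Inr m) \<and> t < c + z (Inl m)) + of_bool (z (Inr m) < z (Inl m)) *
          (\<integral>\<^sup>+y. FF t b a n (Suc m) (c + z (Inr m)) y \<partial>(distr M (PiM K2 (\<lambda>_. borel)) (\<lambda>\<omega>. restrict (\<lambda>i. XX i \<omega>) K2)))"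
      unfolding g_def using fm
      using Y.emeasure_space_1 by (subst nn_integral_add) (auto simp: nn_integral_cmult)
    also have "(\<integral>\<^sup>+y. FF t b a n (Suc m) (c + z (Inr m)) y \<partial>(distr M (PiM K2 (\<lambda>_. borel)) (\<lambda>\<omega>. restrict (\<lambda>i. XX i \<omega>) K2)))
        = PHI Tm mu t b a n (Suc m) (c + z (Inr m))"
      using fm rvY by (subst nn_integral_distr) (auto simp: loc Suc.IH)
    finally show "(\<integral>\<^sup>+y. g z y \<partial>(distr M (PiM K2 (\<lambda>_. borel)) (\<lambda>\<omega>. restrict (\<lambda>i. XX i \<omega>) K2)))
       = h (z (Inl m), z (Inr m))" unfolding h_def fst_conv snd_conv .
  qed
  also have "\<dots> = (\<integral>\<^sup>+\<omega>. h (T m \<omega>, R m \<omega>) \<partial>M)"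
    using rvZ hm inK1 by (subst nn_integral_distr) (auto simp: K1_def)
  also have "\<dots> = (\<integral>\<^sup>+p. h p \<partial>(distr M (borel \<Otimes>\<^sub>M borel) (\<lambda>\<omega>. (T m \<omega>, R m \<omega>))))"
    using hm T_meas R_meas by (subst nn_integral_distr) auto
  also have "\<dots> = (\<integral>\<^sup>+p. h p \<partial>(Tm \<Otimes>\<^sub>M mu m))" by (simp add: pair_law)
  also have "\<dots> = PHI Tm mu t b a (Suc n) m c" by (simp add: h_def)
  finally show ?case .
qed

end



lemma Ttilde_rec: "Ttilde T R \<omega> = (if T 0 \<omega> \<le> R 0 \<omega> then T 0 \<omega>
    else R 0 \<omega> + Ttilde (\<lambda>k. T (Suc k)) (\<lambda>k. R (Suc k)) \<omega>)"
proof (cases "T 0 \<omega> \<le> R 0 \<omega>")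
  case True
  then have "(LEAST k. T k \<omega> \<le> R k \<omega>) = 0" by (simp add: Least_eq_0)
  then show ?thesis using True unfolding Ttilde_def by auto
next
  case False
  have ex: "(\<exists>k. T k \<omega> \<le> R k \<omega>) \<longleftrightarrow> (\<exists>k. T (Suc k) \<omega> \<le> R (Suc k) \<omega>)"
    using False by (metis not0_implies_Suc)
  show ?thesis
  proof (cases "\<exists>k. T (Suc k) \<omega> \<le> R (Suc k) \<omega>")
    case True
    then obtain k where k: "T (Suc k) \<omega> \<le> R (Suc k) \<omega>" by auto
    have L: "(LEAST k. T k \<omega> \<le> R k \<omega>) = Suc (LEAST k. T (Suc k) \<omega> \<le> R (Suc k) \<omega>)"
      by (rule Least_Suc[of "\<lambda>k. T k \<omega> \<le> R k \<omega>" "Suc k", OF k]) (use False in auto)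
    show ?thesis using True False ex unfolding Ttilde_def Let_def L
      by (simp add: sum.lessThan_Suc_shift add.assoc del: sum.lessThan_Suc)
  next
    case F2: False
    then show ?thesis using False ex unfolding Ttilde_def by simp
  qed
qed

definition tt :: "nat \<Rightarrow> (nat + nat \<Rightarrow> ennreal) \<Rightarrow> ennreal" where
  "tt m \<xi> = Ttilde (\<lambda>k (_::unit). \<xi> (Inl (m+k))) (\<lambda>k _. \<xi> (Inr (m+k))) ()"

lemma tt_rec: "tt m \<xi> = (if \<xi> (Inl m) \<le> \<xi> (Inr m) then \<xi> (Inl m) else \<xi> (Inr m) + tt (Suc m) \<xi>)"
  unfolding tt_def by (subst Ttilde_rec) simp

lemma FF_U: "FF t (\<lambda>c. of_bool (t < c)) 1 n m c \<xi> \<le> of_bool (t < c + tt m \<xi>)"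
proof (induction n arbitrary: m c)
  case 0
  have "c \<le> c + tt m \<xi>" by simp
  then have "t < c \<Longrightarrow> t < c + tt m \<xi>" by (rule order.strict_trans2[rotated])
  then show ?case by auto
next
  case (Suc n)
  show ?case
  proof (cases "\<xi> (Inl m) \<le> \<xi> (Inr m)")
    case True
    then show ?thesis by (subst tt_rec) simp
  next
    case False
    then have "\<xi> (Inr m) < \<xi> (Inl m)" by auto
    then show ?thesis using False Suc.IH[where m="Suc m" and c="c + \<xi> (Inr m)"]
      by (subst tt_rec) (simp add: add.assoc)
  qed
qed

lemma FF_Z: "of_bool (t < c + tt m \<xi>) \<le> FF t (\<lambda>_. 1) 1 n m c \<xi>"
proof (induction n arbitrary: m c)
  case 0 then show ?case by simp
next
  case (Suc n)
  show ?case
  proof (cases "\<xi> (Inl m) \<le> \<xi> (Inr m)")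
    case True
    then show ?thesis by (subst tt_rec) simp
  next
    case False
    then have "\<xi> (Inr m) < \<xi> (Inl m)" by auto
    then show ?thesis using False Suc.IH[where m="Suc m" and c="c + \<xi> (Inr m)"]
      by (subst tt_rec) (simp add: add.assoc)
  qed
qed

lemma FF_add: "FF t b1 a1 n m c \<xi> + FF t b2 a2 n m c \<xi> = FF t (\<lambda>c. b1 c + b2 c) (a1 + a2) n m c \<xi>"
proof (induction n arbitrary: m c)
  case 0 then show ?case by simp
next
  case (Suc n)
  show ?case
    by (simp only: FF.simps Suc.IH[symmetric]) (simp add: ring_distribs add_ac)
qed

lemma FF_V: "FF t (\<lambda>c. of_bool (c \<le> t)) 0 n m c \<xi> =
   of_bool ((\<forall>j<n. \<xi> (Inr (m+j)) < \<xi> (Inl (m+j))) \<and> c + (\<Sum>j<n. \<xi> (Inr (m+j))) \<le> t)"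
proof (induction n arbitrary: m c)
  case 0 then show ?case by simp
next
  case (Suc n)
  have a: "(\<forall>j<Suc n. P j) \<longleftrightarrow> P 0 \<and> (\<forall>j<n. P (Suc j))" for P :: "nat \<Rightarrow> bool"
    using less_Suc_eq_0_disj by auto
  show ?case
    by (simp add: Suc.IH a sum.lessThan_Suc_shift add.assoc del: sum.lessThan_Suc)
qed

lemma FF_N: "FF t (\<lambda>_. 1) 0 n m c \<xi> = of_bool (\<forall>j<n. \<xi> (Inr (m+j)) < \<xi> (Inl (m+j)))"
proof (induction n arbitrary: m c)
  case 0 then show ?case by simp
next
  case (Suc n)
  have a: "(\<forall>j<Suc n. P j) \<longleftrightarrow> P 0 \<and> (\<forall>j<n. P (Suc j))" for P :: "nat \<Rightarrow> bool"
    using less_Suc_eq_0_disj by auto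
  show ?case
    by (simp add: Suc.IH a)
qed

lemma tt0: "Ttilde T R \<omega> = tt 0 (\<lambda>i. case i of Inl k \<Rightarrow> T k \<omega> | Inr k \<Rightarrow> R k \<omega>)"
  unfolding tt_def Ttilde_def by simp




context
  fixes Tm :: "ennreal measure" and mu :: "nat \<Rightarrow> ennreal measure"
  assumes Tp: "prob_space Tm" and Ts: "sets Tm = sets borel"
    and mup: "\<And>m. prob_space (mu m)" and mus: "\<And>m. sets (mu m) = sets borel"
begin

lemma Tspace: "space Tm = UNIV"
  using sets_eq_imp_space_eq[OF Ts] by simp

lemma emeasure_pred: "Measurable.pred borel P \<Longrightarrow> emeasure Tm {x. P x} = (\<integral>\<^sup>+x. of_bool (P x) \<partial>Tm)"
proof -
  assume P: "Measurable.pred borel P"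
  have "{x. P x} \<in> sets Tm" unfolding Ts using P by (simp add: pred_def[symmetric] Measurable.pred_def)
  moreover have "(\<integral>\<^sup>+x. of_bool (P x) \<partial>Tm) = (\<integral>\<^sup>+x. indicator {x. P x} x \<partial>Tm)"
    by (auto simp: indicator_def intro!: nn_integral_cong)
  ultimately show ?thesis by simp
qed

lemma iter:
  assumes f: "f \<in> borel_measurable (borel \<Otimes>\<^sub>M borel)"
  shows "(\<integral>\<^sup>+p. f p \<partial>(Tm \<Otimes>\<^sub>M mu m)) = (\<integral>\<^sup>+r. \<integral>\<^sup>+x. f (x, r) \<partial>Tm \<partial>mu m)"
proof -
  interpret pp: pair_prob_space Tm "mu m" using Tp mup by (simp add: pair_prob_space_def pair_sigma_finite_def prob_space_imp_sigma_finite)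
  have sp: "sets (Tm \<Otimes>\<^sub>M mu m) = sets (borel \<Otimes>\<^sub>M borel)"
    using Ts mus by (intro sets_pair_measure_cong) auto
  have f': "f \<in> borel_measurable (Tm \<Otimes>\<^sub>M mu m)" by (subst measurable_cong_sets[OF sp refl]) (rule f)
  show ?thesis using pp.nn_integral_snd[OF f'] by simp
qed

lemma inner:
  "(\<integral>\<^sup>+x. (a * of_bool (x \<le> r \<and> t < c + x) + of_bool (r < x) * K) \<partial>Tm)
    = a * emeasure Tm {x. x \<le> r \<and> t < c + x} + emeasure Tm {x. r < x} * K"
proof -
  have "(\<integral>\<^sup>+x. (a * of_bool (x \<le> r \<and> t < c + x) + of_bool (r < x) * K) \<partial>Tm)
      = a * (\<integral>\<^sup>+x. of_bool (x \<le> r \<and> t < c + x) \<partial>Tm) + (\<integral>\<^sup>+x. of_bool (r < x) \<partial>Tm) * K"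
    using Ts by (subst nn_integral_add) (auto simp: nn_integral_cmult nn_integral_multc measurable_cong_sets[OF Ts refl])
  also have "\<dots> = a * emeasure Tm {x. x \<le> r \<and> t < c + x} + emeasure Tm {x. r < x} * K"
    by (subst (1 2) emeasure_pred) auto
  finally show ?thesis .
qed

lemma EB_meas: "(\<lambda>r. emeasure Tm {x. r < x}) \<in> borel_measurable borel"
proof -
  interpret T: prob_space Tm by (rule Tp)
  have "(\<lambda>(r,x). of_bool (r < x) :: ennreal) \<in> borel_measurable (borel \<Otimes>\<^sub>M Tm)"
    by (subst measurable_cong_sets[OF sets_pair_measure_cong[OF refl Ts] refl]) measurable
  then have "(\<lambda>r. \<integral>\<^sup>+x. of_bool (r < x) \<partial>Tm) \<in> borel_measurable borel"
    by (rule T.borel_measurable_nn_integral[where f="\<lambda>r x. of_bool (r < x)", simplified])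
  then show ?thesis by (subst emeasure_pred) auto
qed

lemma PHI_iter:
  assumes b: "b \<in> borel_measurable borel"
  shows "PHI Tm mu t b a (Suc n) m c = (\<integral>\<^sup>+r. (a * emeasure Tm {x. x \<le> r \<and> t < c + x}
      + emeasure Tm {x. r < x} * PHI Tm mu t b a n (Suc m) (c + r)) \<partial>mu m)"
proof -
  have PH: "PHI Tm mu t b a n (Suc m) \<in> borel_measurable borel"
    by (rule PHI_meas[OF b Ts Tp mus mup])
  have "(\<lambda>p. a * of_bool (fst p \<le> snd p \<and> t < c + fst p)
      + of_bool (snd p < fst p) * PHI Tm mu t b a n (Suc m) (c + snd p)) \<in> borel_measurable (borel \<Otimes>\<^sub>M borel)"
    using PH by measurable
  then show ?thesis
    unfolding PHI.simps by (subst iter) (auto simp: inner)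
qed

definition q :: "nat \<Rightarrow> ennreal" where "q j = (\<integral>\<^sup>+r. emeasure Tm {x. r < x} \<partial>mu j)"

lemma PHI_N: "PHI Tm mu t (\<lambda>_. 1) 0 n m c = (\<Prod>j<n. q (m + j))"
proof (induction n arbitrary: m c)
  case 0 then show ?case by simp
next
  case (Suc n)
  have "PHI Tm mu t (\<lambda>_. 1) 0 (Suc n) m c = (\<integral>\<^sup>+r. emeasure Tm {x. r < x} * (\<Prod>j<n. q (Suc m + j)) \<partial>mu m)"
    by (subst PHI_iter) (auto simp: Suc.IH)
  also have "\<dots> = q m * (\<Prod>j<n. q (Suc m + j))"
    unfolding q_def using EB_meas measurable_cong_sets[OF mus refl]
    by (subst nn_integral_multc) auto
  also have "\<dots> = (\<Prod>j<Suc n. q (m + j))"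
    by (simp add: prod.lessThan_Suc_shift del: prod.lessThan_Suc)
  finally show ?case .
qed


lemma pred_sets: "Measurable.pred borel P \<Longrightarrow> {x. P x} \<in> sets Tm"
  unfolding Ts by (simp add: Measurable.pred_def)

lemma Q_fin:
  assumes "0 \<le> d0" "d0 \<le> t0"
  shows "emeasure Tm {x. ennreal t0 < ennreal d0 + x} = ennreal (Fbar Tm (t0 - d0))"
proof -
  interpret T: prob_space Tm by (rule Tp)
  have "{x. ennreal t0 < ennreal d0 + x} = {ennreal (t0 - d0)<..}"
  proof (intro set_eqI iffI)
    fix x assume "x \<in> {x. ennreal t0 < ennreal d0 + x}"
    then show "x \<in> {ennreal (t0 - d0)<..}" using assms
      by (cases x rule: ennreal_cases) (auto simp: ennreal_plus[symmetric] ennreal_less_iff simp del: ennreal_plus)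
  next
    fix x assume "x \<in> {ennreal (t0 - d0)<..}"
    then show "x \<in> {x. ennreal t0 < ennreal d0 + x}" using assms
      by (cases x rule: ennreal_cases) (auto simp: ennreal_plus[symmetric] ennreal_less_iff simp del: ennreal_plus)
  qed
  then show ?thesis unfolding Fbar_def by (simp add: T.emeasure_eq_measure)
qed

lemma key:
  fixes t0 :: real and c r :: ennreal
  assumes t0: "0 \<le> t0"
  shows "(supermultiplicative (Fbar Tm) \<longrightarrow>
      emeasure Tm {x. x \<le> r \<and> ennreal t0 < c + x} + emeasure Tm {x. r < x} * emeasure Tm {x. ennreal t0 < (c + r) + x}
        \<le> emeasure Tm {x. ennreal t0 < c + x}) \<and>
    (submultiplicative (Fbar Tm) \<longrightarrow>
      emeasure Tm {x. ennreal t0 < c + x} \<le>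
      emeasure Tm {x. x \<le> r \<and> ennreal t0 < c + x} + emeasure Tm {x. r < x} * emeasure Tm {x. ennreal t0 < (c + r) + x})"
proof (cases "ennreal t0 < c + r")
  case True
  interpret T: prob_space Tm by (rule Tp)
  have U: "{x. ennreal t0 < (c + r) + x} = space Tm"
    using True by (auto simp: Tspace intro: order.strict_trans2)
  have mono: "r \<le> x \<Longrightarrow> ennreal t0 < c + x" for x
    using order.strict_trans2[OF True add_left_mono] by blast
  have un: "{x. x \<le> r \<and> ennreal t0 < c + x} \<union> {x. r < x} = {x. ennreal t0 < c + x}"
  proof (intro set_eqI iffI)
    fix x assume "x \<in> {x. x \<le> r \<and> ennreal t0 < c + x} \<union> {x. r < x}"
    then show "x \<in> {x. ennreal t0 < c + x}"
    proof
      assume "x \<in> {x. r < x}"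
      then have "r \<le> x" by auto
      then show ?thesis using mono by auto
    qed auto
  qed (use mono in \<open>auto simp: not_less\<close>)
  have "emeasure Tm {x. x \<le> r \<and> ennreal t0 < c + x} + emeasure Tm {x. r < x} = emeasure Tm {x. ennreal t0 < c + x}"
    unfolding un[symmetric] by (rule plus_emeasure) (auto intro: pred_sets)
  then show ?thesis using U T.emeasure_space_1 by simp
next
  case False
  then have le: "c + r \<le> ennreal t0" by auto
  then have "c \<noteq> \<top>" "r \<noteq> \<top>" by (auto simp: top_unique)
  then obtain c0 r0 where c0: "c = ennreal c0" "0 \<le> c0" and r0: "r = ennreal r0" "0 \<le> r0"
    by (metis ennreal_cases)
  have s: "c0 + r0 \<le> t0" using le c0 r0 t0 by (simp add: ennreal_plus[symmetric] ennreal_le_iff del: ennreal_plus)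
  interpret T: prob_space Tm by (rule Tp)
  have A: "{x. x \<le> r \<and> ennreal t0 < c + x} = {}"
  proof -
    have "c + x \<le> ennreal t0" if "x \<le> r" for x
      using add_left_mono[OF that, of c] le by (rule order.trans)
    then show ?thesis by (auto simp: not_less[symmetric])
  qed
  have B: "emeasure Tm {x. r < x} = ennreal (Fbar Tm r0)"
    unfolding Fbar_def r0 by (simp add: T.emeasure_eq_measure greaterThan_def)
  have Q1: "emeasure Tm {x. ennreal t0 < (c + r) + x} = ennreal (Fbar Tm (t0 - (c0 + r0)))"
    using Q_fin[of "c0 + r0" t0] c0 r0 s by (simp add: ennreal_plus[symmetric] del: ennreal_plus)
  have Q2: "emeasure Tm {x. ennreal t0 < c + x} = ennreal (Fbar Tm (t0 - c0))"
    using Q_fin[of c0 t0] c0 r0 s by simp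
  have nn: "0 \<le> Fbar Tm u" for u unfolding Fbar_def by simp
  have eqs: "r0 + (t0 - (c0 + r0)) = t0 - c0" by simp
  have sup_i: "Fbar Tm r0 * Fbar Tm (t0 - (c0 + r0)) \<le> Fbar Tm (t0 - c0)" if "supermultiplicative (Fbar Tm)"
  proof -
    have "Fbar Tm (r0 + (t0 - (c0 + r0))) \<ge> Fbar Tm r0 * Fbar Tm (t0 - (c0 + r0))"
    proof -
      have h: "\<forall>x y. 0 \<le> x \<longrightarrow> 0 \<le> y \<longrightarrow> Fbar Tm (x + y) \<ge> Fbar Tm x * Fbar Tm y"
        using that unfolding supermultiplicative_def .
      have "0 \<le> t0 - (c0 + r0)" using s by simp
      from h[rule_format, OF r0(2) this] show ?thesis .
    qed
    then show ?thesis using eqs by simp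
  qed
  have sub_i: "Fbar Tm r0 * Fbar Tm (t0 - (c0 + r0)) \<ge> Fbar Tm (t0 - c0)" if "submultiplicative (Fbar Tm)"
  proof -
    have "Fbar Tm (r0 + (t0 - (c0 + r0))) \<le> Fbar Tm r0 * Fbar Tm (t0 - (c0 + r0))"
    proof -
      have h: "\<forall>x y. 0 \<le> x \<longrightarrow> 0 \<le> y \<longrightarrow> Fbar Tm (x + y) \<le> Fbar Tm x * Fbar Tm y"
        using that unfolding submultiplicative_def .
      have "0 \<le> t0 - (c0 + r0)" using s by simp
      from h[rule_format, OF r0(2) this] show ?thesis .
    qed
    then show ?thesis using eqs by simp
  qed
  show ?thesis
    unfolding A B Q1 Q2 emeasure_empty add_0_left
    using sup_i sub_i nn
    by (auto simp: ennreal_mult''[symmetric] intro!: ennreal_leI simp del: ennreal_mult'' ennreal_mult)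
qed

lemma PHI_sub:
  assumes t0: "0 \<le> t0" and sub: "submultiplicative (Fbar Tm)"
  shows "emeasure Tm {x. ennreal t0 < c + x} \<le> PHI Tm mu (ennreal t0) (\<lambda>_. 1) 1 n m c"
proof (induction n arbitrary: m c)
  case 0
  interpret T: prob_space Tm by (rule Tp)
  show ?case using T.emeasure_le_1 by simp
next
  case (Suc n)
  interpret mm: prob_space "mu m" by (rule mup)
  have "emeasure Tm {x. ennreal t0 < c + x} = (\<integral>\<^sup>+r. emeasure Tm {x. ennreal t0 < c + x} \<partial>mu m)"
    using mm.emeasure_space_1 by simp
  also have "\<dots> \<le> (\<integral>\<^sup>+r. (1 * emeasure Tm {x. x \<le> r \<and> ennreal t0 < c + x}
      + emeasure Tm {x. r < x} * PHI Tm mu (ennreal t0) (\<lambda>_. 1) 1 n (Suc m) (c + r)) \<partial>mu m)"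
  proof (rule nn_integral_mono)
    fix r
    have "emeasure Tm {x. ennreal t0 < c + x} \<le> emeasure Tm {x. x \<le> r \<and> ennreal t0 < c + x} + emeasure Tm {x. r < x} * emeasure Tm {x. ennreal t0 < (c + r) + x}"
      using key[OF t0, of r c] sub by simp
    also have "\<dots> \<le> emeasure Tm {x. x \<le> r \<and> ennreal t0 < c + x} + emeasure Tm {x. r < x} * PHI Tm mu (ennreal t0) (\<lambda>_. 1) 1 n (Suc m) (c + r)"
      by (intro add_left_mono mult_left_mono Suc.IH) auto
    finally show "emeasure Tm {x. ennreal t0 < c + x} \<le> 1 * emeasure Tm {x. x \<le> r \<and> ennreal t0 < c + x} + emeasure Tm {x. r < x} * PHI Tm mu (ennreal t0) (\<lambda>_. 1) 1 n (Suc m) (c + r)"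
      by simp
  qed
  also have "\<dots> = PHI Tm mu (ennreal t0) (\<lambda>_. 1) 1 (Suc n) m c"
    by (subst PHI_iter) auto
  finally show ?case .
qed

lemma PHI_super:
  assumes t0: "0 \<le> t0" and sup: "supermultiplicative (Fbar Tm)"
  shows "PHI Tm mu (ennreal t0) (\<lambda>_. 1) 1 n m c \<le> emeasure Tm {x. ennreal t0 < c + x} + (\<Prod>j<n. q (m + j))"
proof (induction n arbitrary: m c)
  case 0
  show ?case by simp
next
  case (Suc n)
  interpret mm: prob_space "mu m" by (rule mup)
  let ?P = "\<Prod>j<n. q (Suc m + j)"
  have "PHI Tm mu (ennreal t0) (\<lambda>_. 1) 1 (Suc n) m c = (\<integral>\<^sup>+r. (1 * emeasure Tm {x. x \<le> r \<and> ennreal t0 < c + x}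
      + emeasure Tm {x. r < x} * PHI Tm mu (ennreal t0) (\<lambda>_. 1) 1 n (Suc m) (c + r)) \<partial>mu m)"
    by (subst PHI_iter) auto
  also have "\<dots> \<le> (\<integral>\<^sup>+r. (emeasure Tm {x. ennreal t0 < c + x} + emeasure Tm {x. r < x} * ?P) \<partial>mu m)"
  proof (rule nn_integral_mono)
    fix r
    have "1 * emeasure Tm {x. x \<le> r \<and> ennreal t0 < c + x} + emeasure Tm {x. r < x} * PHI Tm mu (ennreal t0) (\<lambda>_. 1) 1 n (Suc m) (c + r)
      \<le> emeasure Tm {x. x \<le> r \<and> ennreal t0 < c + x} + emeasure Tm {x. r < x} * (emeasure Tm {x. ennreal t0 < (c + r) + x} + ?P)"
      unfolding mult.left_neutral by (intro add_left_mono mult_left_mono Suc.IH) auto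
    also have "\<dots> = (emeasure Tm {x. x \<le> r \<and> ennreal t0 < c + x} + emeasure Tm {x. r < x} * emeasure Tm {x. ennreal t0 < (c + r) + x})
        + emeasure Tm {x. r < x} * ?P"
      by (simp add: distrib_left add.assoc)
    also have "\<dots> \<le> emeasure Tm {x. ennreal t0 < c + x} + emeasure Tm {x. r < x} * ?P"
      using key[OF t0, of r c] sup by (intro add_right_mono) simp
    finally show "1 * emeasure Tm {x. x \<le> r \<and> ennreal t0 < c + x} + emeasure Tm {x. r < x} * PHI Tm mu (ennreal t0) (\<lambda>_. 1) 1 n (Suc m) (c + r)
      \<le> emeasure Tm {x. ennreal t0 < c + x} + emeasure Tm {x. r < x} * ?P" .
  qed
  also have "\<dots> = emeasure Tm {x. ennreal t0 < c + x} + q m * ?P"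
  proof -
    have EBm: "(\<lambda>r. emeasure Tm {x. r < x}) \<in> borel_measurable (mu m)"
      by (subst measurable_cong_sets[OF mus refl]) (rule EB_meas)
    have "(\<integral>\<^sup>+r. (emeasure Tm {x. ennreal t0 < c + x} + emeasure Tm {x. r < x} * ?P) \<partial>mu m)
        = (\<integral>\<^sup>+r. emeasure Tm {x. ennreal t0 < c + x} \<partial>mu m) + (\<integral>\<^sup>+r. emeasure Tm {x. r < x} * ?P \<partial>mu m)"
      by (rule nn_integral_add) (use EBm in auto)
    also have "(\<integral>\<^sup>+r. emeasure Tm {x. r < x} * ?P \<partial>mu m) = q m * ?P"
      unfolding q_def by (rule nn_integral_multc[OF EBm])
    finally show ?thesis using mm.emeasure_space_1 by simp
  qed
  also have "\<dots> = emeasure Tm {x. ennreal t0 < c + x} + (\<Prod>j<Suc n. q (m + j))"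
    by (simp add: prod.lessThan_Suc_shift del: prod.lessThan_Suc)
  finally show ?case .
qed

end



fun GG :: "nat \<Rightarrow> nat \<Rightarrow> (nat + nat \<Rightarrow> ennreal) \<Rightarrow> ennreal" where
  "GG 0 m \<xi> = \<top>"
| "GG (Suc n) m \<xi> = (if \<xi> (Inl m) \<le> \<xi> (Inr m) then \<xi> (Inl m) else \<xi> (Inr m) + GG n (Suc m) \<xi>)"

lemma GG_ge: "tt m \<xi> \<le> GG n m \<xi>"
proof (induction n arbitrary: m)
  case 0 then show ?case by simp
next
  case (Suc n)
  show ?case using Suc.IH[of "Suc m"] by (subst tt_rec) (auto intro: add_left_mono)
qed

lemma GG_eq: "(\<exists>j<k. \<xi> (Inl (m+j)) \<le> \<xi> (Inr (m+j))) \<Longrightarrow> GG k m \<xi> = tt m \<xi>"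
proof (induction k arbitrary: m)
  case 0 then show ?case by simp
next
  case (Suc k)
  show ?case
  proof (cases "\<xi> (Inl m) \<le> \<xi> (Inr m)")
    case True then show ?thesis by (subst tt_rec) simp
  next
    case False
    then obtain j where j: "j < Suc k" "\<xi> (Inl (m+j)) \<le> \<xi> (Inr (m+j))" "j \<noteq> 0" using Suc.prems by fastforce
    then obtain j' where "j = Suc j'" by (cases j) auto
    with j have "\<exists>j<k. \<xi> (Inl (Suc m + j)) \<le> \<xi> (Inr (Suc m + j))" by (intro exI[of _ j']) auto
    from Suc.IH[OF this] False show ?thesis by (subst tt_rec) simp
  qed
qed

lemma tt_top: "\<not> (\<exists>j. \<xi> (Inl (m+j)) \<le> \<xi> (Inr (m+j))) \<Longrightarrow> tt m \<xi> = \<top>"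
  unfolding tt_def Ttilde_def by simp

lemma tt_INF: "tt m \<xi> = (INF n. GG n m \<xi>)"
proof (rule antisym)
  show "tt m \<xi> \<le> (INF n. GG n m \<xi>)" by (rule INF_greatest) (rule GG_ge)
next
  show "(INF n. GG n m \<xi>) \<le> tt m \<xi>"
  proof (cases "\<exists>j. \<xi> (Inl (m+j)) \<le> \<xi> (Inr (m+j))")
    case True
    then obtain j where "\<xi> (Inl (m+j)) \<le> \<xi> (Inr (m+j))" by auto
    then have "GG (Suc j) m \<xi> = tt m \<xi>" by (intro GG_eq) auto
    then show ?thesis by (metis INF_lower UNIV_I)
  next
    case False then show ?thesis by (simp add: tt_top)
  qed
qed

lemma int_of_bool: "{\<omega>\<in>space M. P \<omega>} \<in> sets M \<Longrightarrow> (\<integral>\<^sup>+\<omega>. of_bool (P \<omega>) \<partial>M) = emeasure M {\<omega>\<in>space M. P \<omega>}"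
proof -
  assume s: "{\<omega>\<in>space M. P \<omega>} \<in> sets M"
  have "(\<integral>\<^sup>+\<omega>. of_bool (P \<omega>) \<partial>M) = (\<integral>\<^sup>+\<omega>. indicator {\<omega>\<in>space M. P \<omega>} \<omega> \<partial>M)"
    by (rule nn_integral_cong) (auto simp: indicator_def)
  then show ?thesis using s by simp
qed

context ttsetup
begin

lemma Xv_meas: "(\<lambda>\<omega>. \<lambda>i. XX i \<omega>) \<in> M \<rightarrow>\<^sub>M PiM UNIV (\<lambda>_. borel)"
  by (rule measurable_PiM_single') (use XX_meas measurable_space in auto)

lemma FF_meas_M:
  assumes b: "b \<in> borel_measurable borel"
  shows "(\<lambda>\<omega>. FF t b a n m c (\<lambda>i. XX i \<omega>)) \<in> borel_measurable M"
proof -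
  have "(\<lambda>\<omega>. (c, \<lambda>i. XX i \<omega>)) \<in> M \<rightarrow>\<^sub>M (borel \<Otimes>\<^sub>M PiM UNIV (\<lambda>_. borel))"
    using Xv_meas by measurable
  from measurable_compose[OF this FF_meas[OF b, of m UNIV t a n]] show ?thesis by simp
qed

lemma Xv_eq: "(\<lambda>i. XX i \<omega>) = (\<lambda>i. case i of Inl k \<Rightarrow> T k \<omega> | Inr k \<Rightarrow> R k \<omega>)"
  by (rule ext) (simp split: sum.split)

lemma Tt_eq: "Ttilde T R \<omega> = tt 0 (\<lambda>i. XX i \<omega>)"
  using tt0[of T R \<omega>] Xv_eq by simp

lemma XX_simps: "XX (Inl k) = T k" "XX (Inr k) = R k" by simp_all

lemma GG_meas: "(\<lambda>\<omega>. GG n m (\<lambda>i. XX i \<omega>)) \<in> borel_measurable M"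
proof -
  have "GG n m \<in> borel_measurable (PiM UNIV (\<lambda>_. borel))" for n m
  proof (induction n arbitrary: m)
    case 0 then show ?case by simp
  next
    case (Suc n)
    have IH: "GG n (Suc m) \<in> borel_measurable (PiM UNIV (\<lambda>_. borel))" by (rule Suc.IH)
    show ?case unfolding GG.simps using IH by measurable
  qed
  from measurable_compose[OF Xv_meas this] show ?thesis by simp
qed

lemma Ttilde_meas: "Ttilde T R \<in> borel_measurable M"
proof -
  have "Ttilde T R = (\<lambda>\<omega>. INF n. GG n 0 (\<lambda>i. XX i \<omega>))"
    by (rule ext) (simp add: Tt_eq tt_INF)
  also have "\<dots> \<in> borel_measurable M" using GG_meas by measurable
  finally show ?thesis .
qed

lemma mu_facts: "prob_space (mu m)" "sets (mu m) = sets borel"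
  using R_meas by (auto intro: prob_space_distr)

lemma q_eq: "q Tm mu j = emeasure M {\<omega>\<in>space M. R j \<omega> < T j \<omega>}"
proof -
  have "q Tm mu j = PHI Tm mu 0 (\<lambda>_. 1) 0 1 j 0"
    using PHI_N[of Tm mu 0 1 j 0, OF Tp Ts mu_facts] by simp
  also have "\<dots> = (\<integral>\<^sup>+\<omega>. FF 0 (\<lambda>_. 1) 0 1 j 0 (\<lambda>i. XX i \<omega>) \<partial>M)"
    by (rule link[symmetric]) simp
  also have "\<dots> = (\<integral>\<^sup>+\<omega>. of_bool (R j \<omega> < T j \<omega>) \<partial>M)"
    by (simp add: FF_N XX_simps)
  also have "\<dots> = emeasure M {\<omega>\<in>space M. R j \<omega> < T j \<omega>}"
    by (rule int_of_bool) (use T_meas R_meas in measurable)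
  finally show ?thesis .
qed

end



context ttsetup
begin

lemma E_sets: "{\<omega>\<in>space M. ennreal t0 < Ttilde T R \<omega>} \<in> sets M"
  using Ttilde_meas by measurable

lemma E_int: "emeasure M {\<omega>\<in>space M. ennreal t0 < Ttilde T R \<omega>}
   = (\<integral>\<^sup>+\<omega>. of_bool (ennreal t0 < 0 + tt 0 (\<lambda>i. XX i \<omega>)) \<partial>M)"
  by (subst int_of_bool[OF E_sets, symmetric]) (simp add: Tt_eq)

lemma Q0: "0 \<le> t0 \<Longrightarrow> emeasure Tm {x. ennreal t0 < 0 + x} = ennreal (Fbar Tm t0)"
  using Q_fin[where Tm=Tm and mu=mu, OF Tp Ts mu_facts, of 0 t0] by simp

lemma super_bound:
  assumes t0: "0 \<le> t0" and sup: "supermultiplicative (Fbar Tm)"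
    and prod0: "(\<lambda>n. \<Prod>k<n. measure M {\<omega> \<in> space M. R k \<omega> < T k \<omega>}) \<longlonglongrightarrow> 0"
  shows "measure M {\<omega>\<in>space M. ennreal t0 < Ttilde T R \<omega>} \<le> Fbar Tm t0"
proof -
  let ?E = "{\<omega>\<in>space M. ennreal t0 < Ttilde T R \<omega>}"
  let ?p = "\<lambda>n. \<Prod>k<n. measure M {\<omega> \<in> space M. R k \<omega> < T k \<omega>}"
  have bnd: "emeasure M ?E \<le> ennreal (Fbar Tm t0) + ennreal (?p n)" for n
  proof -
    have "emeasure M ?E \<le> (\<integral>\<^sup>+\<omega>. FF (ennreal t0) (\<lambda>_. 1) 1 n 0 0 (\<lambda>i. XX i \<omega>) \<partial>M)"
      unfolding E_int by (rule nn_integral_mono) (rule FF_Z)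
    also have "\<dots> = PHI Tm mu (ennreal t0) (\<lambda>_. 1) 1 n 0 0"
      by (rule link) simp
    also have "\<dots> \<le> emeasure Tm {x. ennreal t0 < 0 + x} + (\<Prod>j<n. q Tm mu (0 + j))"
      by (rule PHI_super[OF Tp Ts mu_facts t0 sup])
    also have "(\<Prod>j<n. q Tm mu (0 + j)) = ennreal (?p n)"
      by (simp add: q_eq emeasure_eq_measure prod_ennreal)
    finally show ?thesis using Q0[OF t0] by simp
  qed
  have lim: "(\<lambda>n. ennreal (Fbar Tm t0) + ennreal (?p n)) \<longlonglongrightarrow> ennreal (Fbar Tm t0) + ennreal 0"
    by (intro tendsto_add tendsto_const tendsto_ennrealI prod0)
  have "emeasure M ?E \<le> ennreal (Fbar Tm t0)"
    using LIMSEQ_le_const[OF lim, of "emeasure M ?E"] bnd by simp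
  then show ?thesis
    by (simp add: emeasure_eq_measure Fbar_def ennreal_le_iff)
qed

lemma sub_bound:
  assumes t0: "0 \<le> t0" and sub: "submultiplicative (Fbar Tm)"
    and div: "AE \<omega> in M. (\<lambda>k. \<Sum>l<k. R l \<omega>) \<longlonglongrightarrow> \<infinity>"
  shows "Fbar Tm t0 \<le> measure M {\<omega>\<in>space M. ennreal t0 < Ttilde T R \<omega>}"
proof -
  let ?E = "{\<omega>\<in>space M. ennreal t0 < Ttilde T R \<omega>}"
  define A where "A n = {\<omega>\<in>space M. (\<forall>j<n. R j \<omega> < T j \<omega>) \<and> (\<Sum>j<n. R j \<omega>) \<le> ennreal t0}" for n
  have Am: "A n \<in> sets M" for n unfolding A_def using T_meas R_meas by measurable
  have b1: "(\<lambda>c::ennreal. of_bool (ennreal t0 < c)) \<in> borel_measurable borel" by measurable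
  have b2: "(\<lambda>c::ennreal. of_bool (c \<le> ennreal t0)) \<in> borel_measurable borel" by measurable
  have bnd: "ennreal (Fbar Tm t0) \<le> emeasure M ?E + emeasure M (A n)" for n
  proof -
    have "ennreal (Fbar Tm t0) \<le> PHI Tm mu (ennreal t0) (\<lambda>_. 1) 1 n 0 0"
      using PHI_sub[where Tm=Tm and mu=mu, OF Tp Ts mu_facts t0 sub, where c=0 and n=n and m=0] Q0[OF t0] by simp
    also have "\<dots> = (\<integral>\<^sup>+\<omega>. FF (ennreal t0) (\<lambda>_. 1) 1 n 0 0 (\<lambda>i. XX i \<omega>) \<partial>M)"
      by (rule link[symmetric]) simp
    also have "\<dots> = (\<integral>\<^sup>+\<omega>. (FF (ennreal t0) (\<lambda>c. of_bool (ennreal t0 < c)) 1 n 0 0 (\<lambda>i. XX i \<omega>)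
        + FF (ennreal t0) (\<lambda>c. of_bool (c \<le> ennreal t0)) 0 n 0 0 (\<lambda>i. XX i \<omega>)) \<partial>M)"
    proof -
      have "(\<lambda>c::ennreal. of_bool (ennreal t0 < c) + of_bool (c \<le> ennreal t0)) = (\<lambda>_. 1::ennreal)"
        by (auto simp: fun_eq_iff)
      then show ?thesis using FF_add[of "ennreal t0" "\<lambda>c. of_bool (ennreal t0 < c)" 1 n 0 0 _ "\<lambda>c. of_bool (c \<le> ennreal t0)" 0] by simp
    qed
    also have "\<dots> = (\<integral>\<^sup>+\<omega>. FF (ennreal t0) (\<lambda>c. of_bool (ennreal t0 < c)) 1 n 0 0 (\<lambda>i. XX i \<omega>) \<partial>M)
        + (\<integral>\<^sup>+\<omega>. FF (ennreal t0) (\<lambda>c. of_bool (c \<le> ennreal t0)) 0 n 0 0 (\<lambda>i. XX i \<omega>) \<partial>M)"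
      by (rule nn_integral_add) (auto intro: FF_meas_M b1 b2)
    also have "\<dots> \<le> emeasure M ?E + emeasure M (A n)"
    proof (rule add_mono)
      show "(\<integral>\<^sup>+\<omega>. FF (ennreal t0) (\<lambda>c. of_bool (ennreal t0 < c)) 1 n 0 0 (\<lambda>i. XX i \<omega>) \<partial>M) \<le> emeasure M ?E"
        unfolding E_int by (rule nn_integral_mono) (rule FF_U)
      have "(\<integral>\<^sup>+\<omega>. FF (ennreal t0) (\<lambda>c. of_bool (c \<le> ennreal t0)) 0 n 0 0 (\<lambda>i. XX i \<omega>) \<partial>M)
          = (\<integral>\<^sup>+\<omega>. of_bool ((\<forall>j<n. R j \<omega> < T j \<omega>) \<and> (\<Sum>j<n. R j \<omega>) \<le> ennreal t0) \<partial>M)"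
        by (simp add: FF_V XX_simps)
      also have "\<dots> = emeasure M (A n)"
        unfolding A_def by (rule int_of_bool[OF Am[unfolded A_def]])
      finally show "(\<integral>\<^sup>+\<omega>. FF (ennreal t0) (\<lambda>c. of_bool (c \<le> ennreal t0)) 0 n 0 0 (\<lambda>i. XX i \<omega>) \<partial>M) \<le> emeasure M (A n)"
        by simp
    qed
    finally show ?thesis .
  qed
  have dec: "decseq A"
  proof (rule decseq_SucI)
    fix n show "A (Suc n) \<subseteq> A n"
    proof
      fix \<omega> assume "\<omega> \<in> A (Suc n)"
      then have w1: "\<omega> \<in> space M" "\<forall>j<Suc n. R j \<omega> < T j \<omega>" "(\<Sum>j<Suc n. R j \<omega>) \<le> ennreal t0"
        unfolding A_def by blast+
      have "(\<Sum>j<n. R j \<omega>) \<le> (\<Sum>j<Suc n. R j \<omega>)"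
        by (rule sum_mono2) auto
      then have "(\<Sum>j<n. R j \<omega>) \<le> ennreal t0" using w1(3) by (rule order.trans)
      moreover have "\<forall>j<n. R j \<omega> < T j \<omega>" using w1(2) by simp
      ultimately show "\<omega> \<in> A n" unfolding A_def using w1(1) by blast
    qed
  qed
  have null: "emeasure M (\<Inter>n. A n) = 0"
  proof -
    have eq: "(\<Inter>n. A n) = {\<omega>\<in>space M. \<forall>n. (\<forall>j<n. R j \<omega> < T j \<omega>) \<and> (\<Sum>j<n. R j \<omega>) \<le> ennreal t0}"
      unfolding A_def by auto
    have "AE \<omega> in M. \<not> (\<forall>n. (\<forall>j<n. R j \<omega> < T j \<omega>) \<and> (\<Sum>j<n. R j \<omega>) \<le> ennreal t0)"
      using div
    proof (rule AE_mp, intro AE_I2 impI)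
      fix \<omega> assume "(\<lambda>k. \<Sum>l<k. R l \<omega>) \<longlonglongrightarrow> \<infinity>"
      from order_tendstoD(1)[OF this, of "ennreal t0"] obtain k where "ennreal t0 < (\<Sum>l<k. R l \<omega>)"
        by (auto simp: eventually_sequentially)
      then show "\<not> (\<forall>n. (\<forall>j<n. R j \<omega> < T j \<omega>) \<and> (\<Sum>j<n. R j \<omega>) \<le> ennreal t0)"
        by (auto simp: not_le intro!: exI[of _ k])
    qed
    then show ?thesis unfolding eq by (rule emeasure_eq_0_AE)
  qed
  have lim: "(\<lambda>n. emeasure M ?E + emeasure M (A n)) \<longlonglongrightarrow> emeasure M ?E + 0"
  proof -
    have "(\<lambda>n. emeasure M (A n)) \<longlonglongrightarrow> emeasure M (\<Inter>n. A n)"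
      by (rule Lim_emeasure_decseq[OF _ dec]) (use Am emeasure_finite in auto)
    then show ?thesis unfolding null by (intro tendsto_add tendsto_const)
  qed
  have "ennreal (Fbar Tm t0) \<le> emeasure M ?E"
    using LIMSEQ_le_const[OF lim, of "ennreal (Fbar Tm t0)"] bnd by simp
  then show ?thesis
    by (simp add: emeasure_eq_measure ennreal_le_iff)
qed

end

theorem mainTheorem12:
  fixes M :: "'a measure" and \<T> :: "ennreal measure"
    and T R :: "nat \<Rightarrow> 'a \<Rightarrow> ennreal"
  assumes law: "prob_space \<T>" "sets \<T> = sets borel"
    and pos: "emeasure \<T> {0<..} > 0"
    and supp: "Inf (measure_support \<T>) = 0"
    and M: "prob_space M"
    and T_meas: "\<And>k. T k \<in> borel_measurable M"
    and R_meas: "\<And>k. R k \<in> borel_measurable M"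
    and T_law: "\<And>k. distr M borel (T k) = \<T>"
    and indep: "prob_space.indep_vars M (\<lambda>_. borel)
                  (\<lambda>i. case i of Inl k \<Rightarrow> T k | Inr k \<Rightarrow> R k) UNIV"
    and prod0: "(\<lambda>n. \<Prod>k<n. measure M {\<omega> \<in> space M. R k \<omega> < T k \<omega>}) \<longlonglongrightarrow> 0"
  shows "(supermultiplicative (Fbar \<T>) \<longrightarrow>
            (\<forall>t::real. 0 \<le> t \<longrightarrow>
               measure M {\<omega> \<in> space M. Ttilde T R \<omega> > ennreal t} \<le> Fbar \<T> t))
       \<and> (submultiplicative (Fbar \<T>) \<and>
            (AE \<omega> in M. (\<lambda>k. \<Sum>l<k. R l \<omega>) \<longlonglongrightarrow> \<infinity>) \<longrightarrow>
            (\<forall>t::real. 0 \<le> t \<longrightarrow>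
               measure M {\<omega> \<in> space M. Ttilde T R \<omega> > ennreal t} \<ge> Fbar \<T> t))"
proof -
  interpret ttsetup M \<T> T R
    using law M T_meas R_meas T_law indep by (auto simp: ttsetup_def ttsetup_axioms_def)
  show ?thesis
  proof (intro conjI impI allI)
    fix t :: real
    assume sup: "supermultiplicative (Fbar \<T>)" and t: "0 \<le> t"
    show "measure M {\<omega> \<in> space M. Ttilde T R \<omega> > ennreal t} \<le> Fbar \<T> t"
      using super_bound[OF t sup prod0] by simp
  next
    fix t :: real
    assume H: "submultiplicative (Fbar \<T>) \<and> (AE \<omega> in M. (\<lambda>k. \<Sum>l<k. R l \<omega>) \<longlonglongrightarrow> \<infinity>)" and t: "0 \<le> t"
    show "measure M {\<omega> \<in> space M. Ttilde T R \<omega> > ennreal t} \<ge> Fbar \<T> t"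
      using sub_bound[OF t] H by simp
  qed
qed

end
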